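(* For $n=0,1,2,\ldots$ let $R_n=\sum_{k=0}^n\binom{n}{k}\binom{n+k}{k}\frac{1}{2k-1}$. Then the sequence $\{R_{n+1}/R_n\}_{n\geq 3}$ is strictly increasing with limit $3+2\sqrt{2}$, and the sequence $\{\sqrt[n+1]{R_{n+1}}/\sqrt[n]{R_n}\}_{n\geq 5}$ is strictly decreasing with limit $1$.
   Context: The paper states this as "Conjecture 1.2 (of Z.-W. Sun) is true"; the claim above is the content of that conjecture. *)

theory Defs
  imports "HOL-Analysis.Analysis"
begin

text \<open>R_n = sum_{k=0}^n C(n,k) C(n+k,k) / (2k-1), with 2k-1 computed in the reals (k = 0 gives -1).\<close>
definition R :: "nat \<Rightarrow> real" where
  "R n = (\<Sum>k=0..n. real (n choose k) * real ((n + k) choose k) / (2 * real k - 1))"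

end

theory Submission
  imports Defs
begin


definition B :: "nat \<Rightarrow> nat \<Rightarrow> real" where
  "B m k = real (m choose k) * real ((m + k) choose k)"

definition D :: "nat \<Rightarrow> real" where
  "D n = (\<Sum>k=0..n. B n k)"

lemma R_B: "R n = (\<Sum>k=0..n. B n k / (2 * real k - 1))"
  unfolding R_def B_def by simp

lemma B_zero: "m < k \<Longrightarrow> B m k = 0"
  by (simp add: B_def)

lemma B_nat1: "(Suc m - k) * ((Suc m) choose k) * ((Suc m + k) choose k) = (Suc m + k) * (m choose k) * ((m + k) choose k)"
proof -
  have a: "(Suc m - k) * (Suc m choose k) = Suc m * (m choose k)"
    using binomial_absorb_comp[of "Suc m" k] by simp
  have b: "Suc m * ((Suc m + k) choose k) = (Suc m + k) * ((m + k) choose k)"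
    using binomial_absorb_comp[of "Suc m + k" k] by simp
  have "Suc m * ((Suc m - k) * ((Suc m) choose k) * ((Suc m + k) choose k))
      = Suc m * ((Suc m + k) * (m choose k) * ((m + k) choose k))"
    by (metis a b mult.assoc mult.left_commute)
  then show ?thesis by (subst (asm) nat_mult_eq_cancel1) simp_all
qed

lemma B_rel1: "(real m + 1 - real k) * B (Suc m) k = (real m + 1 + real k) * B m k"
proof (cases "k \<le> Suc m")
  case True
  have "real (Suc m - k) * real ((Suc m) choose k) * real ((Suc m + k) choose k) = real (Suc m + k) * real (m choose k) * real ((m + k) choose k)"
    using B_nat1 by (metis of_nat_mult)
  moreover have "real (Suc m - k) = real m + 1 - real k" using True by (simp add: of_nat_diff)
  ultimately show ?thesis unfolding B_def by (simp add: mult.assoc)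
next
  case False
  then show ?thesis by (simp add: B_zero)
qed

lemma B_nat2: "Suc k * (m choose Suc k) = (m - k) * (m choose k)"
  using binomial_absorption[of k m] binomial_absorb_comp[of m k] by simp

lemma B_rel2: "(real k + 1)^2 * B m (Suc k) = (real m - real k) * (real m + real k + 1) * B m k"
proof (cases "k \<le> m")
  case True
  have a: "real (Suc k) * real (m choose Suc k) = real (m - k) * real (m choose k)"
    using B_nat2 by (metis of_nat_mult)
  have b: "real (Suc k) * real ((m + Suc k) choose Suc k) = real (Suc (m + k)) * real ((m+k) choose k)"
    using Suc_times_binomial[of k "m+k"] by (metis add_Suc_right of_nat_mult)
  have "(real k + 1)^2 * B m (Suc k) = (real (Suc k) * real (m choose Suc k)) * (real (Suc k) * real ((m + Suc k) choose Suc k))"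
    unfolding B_def by (simp add: power2_eq_square algebra_simps)
  also have "\<dots> = (real (m - k) * real (m choose k)) * (real (Suc (m + k)) * real ((m+k) choose k))"
    using a b by simp
  moreover have "real (m - k) = real m - real k" using True by (simp add: of_nat_diff)
  ultimately show ?thesis unfolding B_def by (simp add: algebra_simps)
next
  case False
  then show ?thesis by (simp add: B_zero)
qed

lemma R_term: "(2 * real n + 1) * (B (Suc n) k / (2 * real k - 1)) = (2 * real n + 3) * (B n k / (2 * real k - 1)) + B n k + B (Suc n) k"
proof -
  have nz: "2 * real k - 1 \<noteq> 0"
  proof
    assume "2 * real k - 1 = 0"
    then have "real (2 * k) = 1" by simp
    then have "2 * k = 1" by linarith
    then show False by presburger
  qed
  have r: "(real n + 1 - real k) * B (Suc n) k = (real n + 1 + real k) * B n k" by (rule B_rel1)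
  show ?thesis using nz r by (simp add: field_simps)
qed

lemma R_rel: "(2 * real n + 1) * R (Suc n) = (2 * real n + 3) * R n + D n + D (Suc n)"
proof -
  have e1: "R n = (\<Sum>k=0..Suc n. B n k / (2 * real k - 1))"
    by (simp add: R_B B_zero)
  have e2: "D n = (\<Sum>k=0..Suc n. B n k)"
    by (simp add: D_def B_zero)
  have "(2 * real n + 1) * R (Suc n) = (\<Sum>k=0..Suc n. (2 * real n + 1) * (B (Suc n) k / (2 * real k - 1)))"
    unfolding R_B by (simp only: sum_distrib_left)
  also have "\<dots> = (\<Sum>k=0..Suc n. (2 * real n + 3) * (B n k / (2 * real k - 1)) + B n k + B (Suc n) k)"
    by (intro sum.cong refl) (rule R_term)
  also have "\<dots> = (2 * real n + 3) * R n + D n + D (Suc n)"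
    by (simp only: e1 e2 D_def[of "Suc n"] sum_distrib_left sum.distrib)
  finally show ?thesis .
qed

definition G :: "nat \<Rightarrow> nat \<Rightarrow> real" where
  "G n k = - (4 * real n + 6) * (real k)^2 * B (n+2) k / ((real n + real k + 1) * (real n + real k + 2))"

lemma D_term: "(real n + 2) * B (n+2) k - 3 * (2 * real n + 3) * B (n+1) k + (real n + 1) * B n k = G n (Suc k) - G n k"
proof -
  define X where "X = B (n+2) k"
  have r1: "(real n + 2 - real k) * X = (real n + 2 + real k) * B (n+1) k"
    using B_rel1[of "n+1" k] unfolding X_def by (simp add: algebra_simps)
  have r2: "(real n + 1 - real k) * B (n+1) k = (real n + 1 + real k) * B n k"
    using B_rel1[of n k] by simp
  have r3: "(real k + 1)^2 * B (n+2) (Suc k) = (real n + 2 - real k) * (real n + real k + 3) * X"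
    using B_rel2[of k "n+2"] unfolding X_def by (simp add: algebra_simps)
  define a where "a = real n"
  define c where "c = real k"
  define u where "u = 1 / (a + c + 1)"
  define v where "v = 1 / (a + c + 2)"
  define w where "w = 1 / (a + c + 3)"
  have hu: "u * (a + c + 1) = 1" unfolding u_def a_def c_def by (simp add: field_simps)
  have hv: "v * (a + c + 2) = 1" unfolding v_def a_def c_def by (simp add: field_simps)
  have hw: "w * (a + c + 3) = 1" unfolding w_def a_def c_def by (simp add: field_simps)
  have g1: "G n (Suc k) = - (4 * a + 6) * ((c + 1)^2 * B (n+2) (Suc k)) * (v * w)"
    unfolding G_def v_def w_def a_def c_def by (simp add: field_simps)
  have g0: "G n k = - (4 * a + 6) * c^2 * X * (u * v)"
    unfolding G_def u_def v_def a_def c_def X_def by (simp add: field_simps)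
  have r1': "(a + 2 - c) * X = (a + 2 + c) * B (n+1) k" using r1 unfolding a_def c_def .
  have r2': "(a + 1 - c) * B (n+1) k = (a + 1 + c) * B n k" using r2 unfolding a_def c_def .
  have r3': "(c + 1)^2 * B (n+2) (Suc k) = (a + 2 - c) * (a + c + 3) * X" using r3 unfolding a_def c_def .
  have "(a + 2) * X - 3 * (2 * a + 3) * B (n+1) k + (a + 1) * B n k = G n (Suc k) - G n k"
    unfolding g1 g0 using hu hv hw r1' r2' r3' by algebra
  then show ?thesis unfolding a_def c_def X_def .
qed

lemma D_ext: "m < N \<Longrightarrow> D m = (\<Sum>k<N. B m k)"
  unfolding D_def by (rule sum.mono_neutral_left) (auto simp: B_zero)

lemma D_rec: "(real n + 2) * D (n+2) = 3 * (2 * real n + 3) * D (n+1) - (real n + 1) * D n"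
proof -
  have e1: "D (n+1) = (\<Sum>k<n+3. B (n+1) k)"
    by (rule D_ext) simp
  have e0: "D n = (\<Sum>k<n+3. B n k)"
    by (rule D_ext) simp
  have e2: "D (n+2) = (\<Sum>k<n+3. B (n+2) k)"
    by (rule D_ext) simp
  have "(real n + 2) * D (n+2) - 3 * (2 * real n + 3) * D (n+1) + (real n + 1) * D n
      = (\<Sum>k<n+3. (real n + 2) * B (n+2) k - 3 * (2 * real n + 3) * B (n+1) k + (real n + 1) * B n k)"
    unfolding e0 e1 e2 by (simp add: sum.distrib sum_subtractf sum_distrib_left)
  also have "\<dots> = (\<Sum>k<n+3. G n (Suc k) - G n k)"
    by (intro sum.cong refl) (rule D_term)
  also have "\<dots> = G n (n+3) - G n 0"
    by (rule sum_lessThan_telescope)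
  also have "\<dots> = 0" by (simp add: G_def B_zero)
  finally show ?thesis by simp
qed

lemma R_rec3: "(real n + 3) * R (n+3) = (7 * real n + 13) * R (n+2) - (7 * real n + 15) * R (n+1) + (real n + 1) * R n"
proof -
  define a where "a = real n"
  have e0: "(2 * a + 1) * R (n+1) = (2 * a + 3) * R n + D n + D (n+1)"
    using R_rel[of n] unfolding a_def by simp
  have e1: "(2 * a + 3) * R (n+2) = (2 * a + 5) * R (n+1) + D (n+1) + D (n+2)"
    using R_rel[of "n+1"] unfolding a_def by (simp add: algebra_simps)
  have e2: "(2 * a + 5) * R (n+3) = (2 * a + 7) * R (n+2) + D (n+2) + D (n+3)"
    using R_rel[of "n+2"] unfolding a_def by (simp add: algebra_simps numeral_eq_Suc)
  have d0: "(a + 2) * D (n+2) = 3 * (2 * a + 3) * D (n+1) - (a + 1) * D n"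
    using D_rec[of n] unfolding a_def .
  have d1: "(a + 3) * D (n+3) = 3 * (2 * a + 5) * D (n+2) - (a + 2) * D (n+1)"
    using D_rec[of "n+1"] unfolding a_def by (simp add: algebra_simps numeral_eq_Suc)
  define p where "p = 1 / (2 * a + 3)"
  define q where "q = 1 / (2 * a + 5)"
  have hp: "p * (2 * a + 3) = 1" unfolding p_def a_def by (simp add: field_simps)
  have hq: "q * (2 * a + 5) = 1" unfolding q_def a_def by (simp add: field_simps)
  have "(a + 3) * R (n+3) = (7 * a + 13) * R (n+2) - (7 * a + 15) * R (n+1) + (a + 1) * R n"
    using e0 e1 e2 d0 d1 hp hq by algebra
  then show ?thesis unfolding a_def .
qed

lemma R_0: "R 0 = -1" by (simp add: R_def)
lemma R_1: "R 1 = 1" by (simp add: R_def)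
lemma R_2: "R 2 = 7" by (simp add: R_def numeral_eq_Suc)
lemma R_3: "R 3 = 25"
  using R_rec3[of 0] R_2 R_1 R_0 by (simp add: eval_nat_numeral)
lemma R_4: "R 4 = 87"
  using R_rec3[of 1] R_3 R_2 R_1 by (simp add: eval_nat_numeral)
lemma R_5: "R 5 = 329"
  using R_rec3[of 2] R_4 R_3 R_2 by (simp add: eval_nat_numeral)
lemma R_6: "R 6 = 1359"
  using R_rec3[of 3] R_5 R_4 R_3 by (simp add: eval_nat_numeral)
lemma R_7: "R 7 = 6001"
  using R_rec3[of 4] R_6 R_5 R_4 by (simp add: eval_nat_numeral)
lemma R_8: "R 8 = 27759"
  using R_rec3[of 5] R_7 R_6 R_5 by (simp add: eval_nat_numeral)
lemma R_9: "R 9 = 132689"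
  using R_rec3[of 6] R_8 R_7 R_6 by (simp add: eval_nat_numeral)
lemma R_10: "R 10 = 649815"
  using R_rec3[of 7] R_9 R_8 R_7 by (simp add: eval_nat_numeral)
lemma R_11: "R 11 = 3242377"
  using R_rec3[of 8] R_10 R_9 R_8 by (simp add: eval_nat_numeral)
lemma R_12: "R 12 = 16421831"
  using R_rec3[of 9] R_11 R_10 R_9 by (simp add: eval_nat_numeral)
lemma R_13: "R 13 = 84196761"
  using R_rec3[of 10] R_12 R_11 R_10 by (simp add: eval_nat_numeral)
lemma R_14: "R 14 = 436129183"
  using R_rec3[of 11] R_13 R_12 R_11 by (simp add: eval_nat_numeral)
lemma R_15: "R 15 = 2278835681"
  using R_rec3[of 12] R_14 R_13 R_12 by (simp add: eval_nat_numeral)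
lemma R_16: "R 16 = 11996748255"
  using R_rec3[of 13] R_15 R_14 R_13 by (simp add: eval_nat_numeral)
lemma R_17: "R 17 = 63568974241"
  using R_rec3[of 14] R_16 R_15 R_14 by (simp add: eval_nat_numeral)
lemma R_18: "R 18 = 338777252263"
  using R_rec3[of 15] R_17 R_16 R_15 by (simp add: eval_nat_numeral)



definition Phi :: "real \<Rightarrow> real \<Rightarrow> real \<Rightarrow> real" where
  "Phi k x y = ((7*k+13) - (7*k+15)/x + (k+1)/(x*y)) / (k+3)"

lemma Phi_diff1:
  assumes "a > 0" "b > 0" "e > 0" "k \<ge> 0"
  shows "Phi (k+1) a b - Phi (k+1) b e = (a - b) * (((7*k+22) - (k+2)/e) / (a*b*(k+4))) - (b - e) * ((k+2)/(a*b*e*(k+4)))"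
proof -
  have h: "inverse a * a = 1" "inverse b * b = 1" "inverse e * e = 1" "inverse (k+4) * (k+4) = 1"
    using assms by auto
  show ?thesis unfolding Phi_def divide_inverse inverse_mult_distrib
    using h by (simp add: algebra_simps) algebra
qed

lemma Phi_diff2:
  assumes "b > 0" "e > 0" "k \<ge> 0"
  shows "Phi (k+1) b e - Phi k b e = (8 - 6/b + 2/(b*e)) / ((k+3)*(k+4))"
proof -
  have h: "inverse b * b = 1" "inverse e * e = 1" "inverse (k+4) * (k+4) = 1" "inverse (k+3) * (k+3) = 1"
    using assms by auto
  show ?thesis unfolding Phi_def divide_inverse inverse_mult_distrib
    using h by (simp add: algebra_simps) algebra
qed

lemma cancel2: "(a::real) \<noteq> 0 \<Longrightarrow> b \<noteq> 0 \<Longrightarrow> c / (a*b) * (a*b*x) = c*x" by simp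

lemma fin_ineq: "(k::real) \<ge> 14 \<Longrightarrow> (48/5) / ((k+1)*(k+2)) * (175/676) + (141/20) / ((k+3)*(k+4)) \<le> (48/5) / ((k+2)*(k+3))"
proof -
  assume k: "k \<ge> 14"
  have p: "k+1 \<noteq> 0" "k+2 \<noteq> 0" "k+3\<noteq>0" "k+4\<noteq>0" using k by linarith+
  define M where "M = (k+1)*(k+2)*(k+3)*(k+4)"
  have M: "M > 0" unfolding M_def using k by simp
  have e1: "(48/5) / ((k+1)*(k+2)) * (175/676) * M = ((48/5)*(175/676))*((k+3)*(k+4))"
  proof -
    have "(48/5) / ((k+1)*(k+2)) * (175/676) = ((48/5)*(175/676)) / ((k+1)*(k+2))" by simp
    moreover have "M = (k+1)*(k+2)*((k+3)*(k+4))" unfolding M_def by (simp add: ac_simps)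
    ultimately show ?thesis using cancel2[OF p(1) p(2)] by presburger
  qed
  have e2: "(141/20) / ((k+3)*(k+4)) * M = (141/20)*((k+1)*(k+2))"
  proof -
    have "M = (k+3)*(k+4)*((k+1)*(k+2))" unfolding M_def by (simp add: ac_simps)
    then show ?thesis using cancel2[OF p(3) p(4)] by presburger
  qed
  have e3: "(48/5) / ((k+2)*(k+3)) * M = (48/5)*((k+1)*(k+4))"
  proof -
    have "M = (k+2)*(k+3)*((k+1)*(k+4))" unfolding M_def by (simp add: ac_simps)
    then show ?thesis using cancel2[OF p(2) p(3)] by presburger
  qed
  have "((48/5)*(175/676))*((k+3)*(k+4)) + (141/20)*((k+1)*(k+2)) \<le> (48/5)*((k+1)*(k+4))"
  proof -
    define s where "s = k*k"
    have kk: "14*k \<le> s" unfolding s_def using k by (intro mult_right_mono) auto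
    have q: "(k+3)*(k+4) = s + 7*k + 12" "(k+1)*(k+2) = s+3*k+2" "(k+1)*(k+4) = s+5*k+4"
      unfolding s_def by (simp_all add: algebra_simps)
    show ?thesis unfolding q using k kk by (simp add: field_simps)
  qed
  then have "((48/5) / ((k+1)*(k+2)) * (175/676) + (141/20) / ((k+3)*(k+4))) * M \<le> (48/5) / ((k+2)*(k+3)) * M"
    unfolding distrib_right[of "(48/5) / ((k+1)*(k+2)) * (175/676)" "(141/20) / ((k+3)*(k+4))" M] e1 e2 e3 .
  then show ?thesis using M by (rule mult_right_le_imp_le)
qed

lemma Phi_step:
  fixes k e b a :: real
  assumes k: "k \<ge> 14" and he: "26/5 \<le> e" and eb: "e < b" and ba: "b < a" and a59: "a \<le> 59/10"
    and d1: "b - e \<le> 10 * (a - b)" and d2: "a - b \<le> (48/5) / ((k+1)*(k+2))"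
    and ha: "a = Phi k b e"
  shows "a < Phi (k+1) a b" "a - b \<le> 10 * (Phi (k+1) a b - a)"
    "Phi (k+1) a b - a \<le> (48/5) / ((k+2)*(k+3))" "Phi (k+1) a b \<le> 59/10"
proof -
  have e0: "e > 0" "b > 0" "a > 0" using he eb ba by linarith+
  have hb: "26/5 \<le> b" "26/5 \<le> a" using he eb ba by linarith+
  define A where "A = ((7*k+22) - (k+2)/e) / (a*b*(k+4))"
  define Bc where "Bc = (k+2)/(a*b*e*(k+4))"
  define g where "g = (8 - 6/b + 2/(b*e)) / ((k+3)*(k+4))"
  have id: "Phi (k+1) a b - a = (a - b) * A - (b - e) * Bc + g"
  proof -
    have "Phi (k+1) a b - a = (Phi (k+1) a b - Phi (k+1) b e) + (Phi (k+1) b e - Phi k b e)"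
      using ha by linarith
    also have "\<dots> = (a - b) * A - (b - e) * Bc + g"
      using Phi_diff1[OF e0(3) e0(2) e0(1), of k] Phi_diff2[OF e0(2) e0(1), of k] k unfolding A_def Bc_def g_def
      by linarith
    finally show ?thesis .
  qed
  have ie: "1/e \<le> 5/26" using he by (simp add: field_simps)
  have ib: "1/b \<le> 5/26" using hb by (simp add: field_simps)
  have ab: "a*b \<le> (59/10)^2"
  proof -
    have "a*b \<le> (59/10)*(59/10)" using a59 ba e0 by (intro mult_mono) auto
    then show ?thesis by (simp add: power2_eq_square)
  qed
  have ab2: "a*b \<ge> (26/5)^2"
  proof -
    have "(26/5)*(26/5) \<le> a*b" using hb by (intro mult_mono) auto
    then show ?thesis by (simp add: power2_eq_square)
  qed
  have abe: "a*b*e \<ge> (26/5)^3"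
  proof -
    have "((26/5)*(26/5))*(26/5) \<le> (a*b)*e" using hb he ab2 by (intro mult_mono) (auto simp: power2_eq_square)
    then show ?thesis by (simp add: power3_eq_cube)
  qed
  have k4: "k + 4 > 0" "k+3 > 0" "k+2>0" "k+1>0" using k by linarith+
  have t1: "(k+2)/e \<le> (k+2)*(5/26)"
  proof -
    have "(k+2)*(1/e) \<le> (k+2)*(5/26)" using k by (intro mult_left_mono[OF ie]) simp
    then show ?thesis by simp
  qed
  have t1b: "(k+2)/b \<le> (k+2)*(5/26)"
  proof -
    have "(k+2)*(1/b) \<le> (k+2)*(5/26)" using k by (intro mult_left_mono[OF ib]) simp
    then show ?thesis by simp
  qed
  define N0 where "N0 = (7*k+22) - (k+2)*(5/26)"
  have N0pos: "N0 > 0" unfolding N0_def using k by simp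
  define X0 where "X0 = N0 / (59/10)^2"
  define Y0 where "Y0 = (k+2) / (26/5)^3"
  have A_lo0: "A \<ge> N0 / ((59/10)^2 * (k+4))"
    unfolding A_def
  proof (rule frac_le)
    show "0 \<le> 7 * k + 22 - (k + 2) / e" using N0pos t1 unfolding N0_def by linarith
    show "N0 \<le> 7 * k + 22 - (k + 2) / e" using t1 unfolding N0_def by linarith
    show "0 < a * b * (k + 4)" using e0 k4 by simp
    show "a * b * (k + 4) \<le> (59 / 10)\<^sup>2 * (k + 4)" using ab k4 by (simp add: mult_right_mono)
  qed
  have A_lo: "A \<ge> X0 / (k+4)" using A_lo0 unfolding X0_def by (simp add: divide_divide_eq_left)
  have B_hi0: "Bc \<le> (k+2) / ((26/5)^3 * (k+4))"
    unfolding Bc_def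
  proof (rule frac_le)
    show "0 \<le> k + 2" using k by simp
    show "k+2 \<le> k+2" by simp
    show "0 < (26/5)^3 * (k + 4)" using k4 by simp
    show "(26/5)^3 * (k + 4) \<le> a * b * e * (k + 4)" using abe k4 by (simp add: mult_right_mono)
  qed
  have B_hi: "Bc \<le> Y0 / (k+4)" using B_hi0 unfolding Y0_def by (simp add: divide_divide_eq_left)
  have Bpos: "Bc > 0" unfolding Bc_def using e0 k4 by simp
  have lin: "(k+4)/10 \<le> X0 - 10 * Y0" unfolding X0_def Y0_def N0_def using k by (simp add: power2_eq_square power3_eq_cube field_simps)
  have AB0: "1/10 \<le> (X0 - 10 * Y0) / (k+4)"
    using lin k4 by (simp add: pos_le_divide_eq)
  have AB: "X0 / (k+4) - 10 * (Y0 / (k+4)) \<ge> 1/10"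
    using AB0 by (simp add: diff_divide_distrib)
  have A10B: "A - 10 * Bc \<ge> 1/10" using A_lo B_hi AB by linarith
  have gnum: "8 - 6/b + 2/(b*e) > 0"
  proof -
    have "6*(1/b) \<le> 6 * (5/26)" using ib by (intro mult_left_mono) auto
    then have "6/b \<le> 6 * (5/26)" by simp
    moreover have "2/(b*e) > 0" using e0 by simp
    ultimately show ?thesis by linarith
  qed
  have gpos: "g > 0" unfolding g_def using gnum k4 by simp
  have gnum2: "8 - 6/b + 2/(b*e) \<le> 141/20"
  proof -
    have "2*(1/e) \<le> 2 * (5/26)" using ie by (intro mult_left_mono) auto
    then have "6 - 2/e \<ge> 73/13" by simp
    then have c0: "(6 - 2/e)/b \<ge> (73/13)/(59/10)"
      using e0 ba a59 by (intro frac_le) auto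
    have c1: "(73/13)/(59/10) = (730/767::real)" by simp
    have eq: "8 - 6/b + 2/(b*e) = 8 - (6 - 2/e)/b" using e0 by (simp add: field_simps)
    have aux: "\<And>X Y::real. Y = 8 - X \<Longrightarrow> 730/767 \<le> X \<Longrightarrow> Y \<le> 141/20" by linarith
    show ?thesis by (rule aux[OF eq]) (use c0 c1 in simp)
  qed
  have g_hi: "g \<le> (141/20) / ((k+3)*(k+4))"
    unfolding g_def using gnum gnum2 k4 by (intro divide_right_mono) auto
  have lower: "Phi (k+1) a b - a \<ge> (a - b)/10 + g"
  proof -
    have "(b - e) * Bc \<le> 10 * (a - b) * Bc" using d1 Bpos by (simp add: mult_right_mono)
    moreover have "(a - b) * (A - 10 * Bc) \<ge> (a - b) * (1/10)" using A10B ba by (simp add: mult_left_mono)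
    ultimately show ?thesis unfolding id by (simp add: algebra_simps)
  qed
  show "a < Phi (k+1) a b" using lower gpos ba by argo
  show "a - b \<le> 10 * (Phi (k+1) a b - a)" using lower gpos by argo
  have A_hi: "A \<le> 175/676"
  proof -
    have "A \<le> (7*k+22) / (a*b*(k+4))" unfolding A_def
      using e0 k4 k by (intro divide_right_mono) auto
    also have "\<dots> \<le> (7*(k+4)) / ((26/5)^2*(k+4))"
      using ab2 k4 k by (intro frac_le) (auto simp: mult_right_mono)
    also have "\<dots> = 7/(26/5)^2" using k4 by (intro nonzero_mult_divide_mult_cancel_right) simp
    also have "\<dots> = 175/676" by (simp add: power2_eq_square)
    finally show ?thesis .
  qed
  have Anum: "0 < 7*k+22 - (k+2)/e" using N0pos t1 unfolding N0_def by linarith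
  have Apos: "A > 0" unfolding A_def using Anum e0 k4 by (intro divide_pos_pos) auto
  have "Phi (k+1) a b - a \<le> (a - b) * A + g" unfolding id using Bpos eb by simp
  also have "\<dots> \<le> (48/5) / ((k+1)*(k+2)) * (175/676) + (141/20) / ((k+3)*(k+4))"
  proof -
    have "(a-b)*A \<le> (48/5)/((k+1)*(k+2))*(175/676)"
      by (rule mult_mono[OF d2 A_hi]) (use ba Apos k4 in auto)
    then show ?thesis using g_hi by (rule add_mono)
  qed
  also have "\<dots> \<le> (48/5) / ((k+2)*(k+3))"
    by (rule fin_ineq[OF k])
  finally show "Phi (k+1) a b - a \<le> (48/5) / ((k+2)*(k+3))" .
  have M: "(7*k+22) - (k+2)/b \<ge> N0" unfolding N0_def using t1b by linarith
  have Ma: "((7*k+22) - (k+2)/b)/a \<ge> N0/(59/10)"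
    using M N0pos a59 e0 by (intro frac_le) auto
  have "Phi (k+1) a b = ((7*k+20) - ((7*k+22) - (k+2)/b)/a)/(k+4)"
  proof -
    have "(k+1+1)/(a*b) = ((k+2)/b)/a" by (simp add: mult.commute)
    then show ?thesis unfolding Phi_def by (simp add: diff_divide_distrib algebra_simps)
  qed
  also have "\<dots> \<le> ((7*k+20) - N0/(59/10))/(k+4)"
    using Ma k4 by (intro divide_right_mono) auto
  also have "\<dots> \<le> 59/10"
  proof -
    have "(7*k+20) - N0/(59/10) \<le> 59/10 * (k+4)" unfolding N0_def using k by (simp add: field_simps)
    then show ?thesis using k4 by (simp add: pos_divide_le_eq)
  qed
  finally show "Phi (k+1) a b \<le> 59/10" .
qed


lemma B_nonneg: "B m k \<ge> 0" by (simp add: B_def)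

lemma D_nonneg: "D n \<ge> 0" unfolding D_def by (intro sum_nonneg) (simp add: B_nonneg)

lemma R_mono_step: "R n \<ge> 0 \<Longrightarrow> R n \<le> R (Suc n)"
proof -
  assume h: "R n \<ge> 0"
  have "(2 * real n + 1) * R (Suc n) = (2 * real n + 3) * R n + D n + D (Suc n)" by (rule R_rel)
  also have "\<dots> \<ge> (2 * real n + 1) * R n" using h D_nonneg[of n] D_nonneg[of "Suc n"] by (simp add: algebra_simps)
  finally have "(2 * real n + 1) * R n \<le> (2 * real n + 1) * R (Suc n)" .
  then show ?thesis by (simp add: mult_le_cancel_left_pos)
qed

lemma R_ge1: "n \<ge> 1 \<Longrightarrow> R n \<ge> 1"
proof (induction n rule: dec_induct)
  case base then show ?case using R_1 by simp
next
  case (step m) then show ?case using R_mono_step[of m] by simp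
qed

definition r :: "nat \<Rightarrow> real" where "r n = R (Suc n) / R n"

lemma r_rec: "n \<ge> 1 \<Longrightarrow> r (n+2) = Phi (real n) (r (n+1)) (r n)"
proof -
  assume n: "n \<ge> 1"
  define P where "P = R n"
  define Q where "Q = R (n+1)"
  define S where "S = R (n+2)"
  define T where "T = R (n+3)"
  have pos: "P > 0" "Q > 0" "S > 0" using R_ge1[of n] R_ge1[of "n+1"] R_ge1[of "n+2"] n unfolding P_def Q_def S_def by auto
  have rec: "(real n + 3) * T = (7 * real n + 13) * S - (7 * real n + 15) * Q + (real n + 1) * P"
    unfolding P_def Q_def S_def T_def by (rule R_rec3)
  have e: "r (n+2) = T / S" "r (n+1) = S / Q" "r n = Q / P"
    unfolding r_def P_def Q_def S_def T_def by (simp_all add: numeral_eq_Suc)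
  have h: "inverse P * P = 1" "inverse Q * Q = 1" "inverse S * S = 1" "inverse (real n + 3) * (real n + 3) = 1"
    using pos by auto
  show ?thesis unfolding e Phi_def divide_inverse inverse_mult_distrib inverse_inverse_eq
    using h rec by algebra
qed

lemmas Rvals = R_0 R_1 R_2 R_3 R_4 R_5 R_6 R_7 R_8 R_9 R_10 R_11 R_12 R_13 R_14 R_15 R_16 R_17 R_18

definition Inv :: "nat \<Rightarrow> bool" where
  "Inv n \<longleftrightarrow> 26/5 \<le> r n \<and> r n < r (n+1) \<and> r (n+1) < r (n+2) \<and> r (n+2) \<le> 59/10
     \<and> r (n+1) - r n \<le> 10 * (r (n+2) - r (n+1))
     \<and> r (n+2) - r (n+1) \<le> (48/5) / ((real n + 1) * (real n + 2))"

lemma Inv_14: "Inv 14"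
  unfolding Inv_def r_def by (simp add: Rvals)

lemma Inv_all: "n \<ge> 14 \<Longrightarrow> Inv n"
proof (induction n rule: dec_induct)
  case base then show ?case by (rule Inv_14)
next
  case (step m)
  have m: "real m \<ge> 14" using step.hyps by simp
  have I: "26/5 \<le> r m" "r m < r (m+1)" "r (m+1) < r (m+2)" "r (m+2) \<le> 59/10"
     "r (m+1) - r m \<le> 10 * (r (m+2) - r (m+1))"
     "r (m+2) - r (m+1) \<le> (48/5) / ((real m + 1) * (real m + 2))"
    using step.IH unfolding Inv_def by auto
  have ha: "r (m+2) = Phi (real m) (r (m+1)) (r m)" using r_rec[of m] step.hyps by simp
  have nx: "r (m+3) = Phi (real m + 1) (r (m+2)) (r (m+1))"
    using r_rec[of "m+1"] step.hyps by (simp add: numeral_eq_Suc add.commute)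
  note S = Phi_step[OF m I(1) I(2) I(3) I(4) I(5) I(6) ha]
  show ?case unfolding Inv_def
    using S I unfolding nx[symmetric] by (simp add: numeral_eq_Suc algebra_simps)
qed

lemma R_pos: "n \<ge> 1 \<Longrightarrow> R n > 0" using R_ge1[of n] by simp

lemma r_ge1: "n \<ge> 1 \<Longrightarrow> r n \<ge> 1"
  unfolding r_def using R_pos[of n] R_mono_step[of n] by simp

lemma r_pos: "n \<ge> 1 \<Longrightarrow> r n > 0" using r_ge1[of n] by simp

lemma r_incr: "n \<ge> 3 \<Longrightarrow> r n < r (Suc n)"
proof (cases "n \<ge> 14")
  case True then show ?thesis using Inv_all[of n] unfolding Inv_def by simp
next
  case False
  assume "n \<ge> 3"
  then have "n = 3 \<or> n = 4 \<or> n = 5 \<or> n = 6 \<or> n = 7 \<or> n = 8 \<or> n = 9 \<or> n = 10 \<or> n = 11 \<or> n = 12 \<or> n = 13" using False by presburger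
  then show ?thesis unfolding r_def by (elim disjE) (simp_all add: Rvals)
qed

lemma r_le: "n \<ge> 3 \<Longrightarrow> r n \<le> 59/10"
proof (cases "n \<ge> 16")
  case True
  then have "Inv (n-2)" by (intro Inv_all) simp
  moreover have "n - 2 + 2 = n" using True by simp
  ultimately show ?thesis unfolding Inv_def by metis
next
  case False
  assume "n \<ge> 3"
  then have "n = 3 \<or> n = 4 \<or> n = 5 \<or> n = 6 \<or> n = 7 \<or> n = 8 \<or> n = 9 \<or> n = 10 \<or> n = 11 \<or> n = 12 \<or> n = 13 \<or> n = 14 \<or> n = 15" using False by presburger
  then show ?thesis unfolding r_def by (elim disjE) (simp_all add: Rvals)
qed

lemma r_ge: "n \<ge> 14 \<Longrightarrow> 26/5 \<le> r n" using Inv_all[of n] unfolding Inv_def by simp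

lemma M4: "n \<ge> 5 \<Longrightarrow> real n * (real n + 1) * (r (Suc n) / r n - 1) < 21/10"
proof (cases "n \<ge> 15")
  case True
  then have I: "Inv (n-1)" by (intro Inv_all) simp
  have e: "n - 1 + 1 = n" "n - 1 + 2 = Suc n" "real (n - 1) + 1 = real n" "real (n-1) + 2 = real n + 1"
    using True by (simp_all add: of_nat_diff)
  have d: "r (Suc n) - r n \<le> (48/5) / (real n * (real n + 1))"
    using I unfolding Inv_def e by simp
  have rn: "r n \<ge> 26/5" using r_ge[of n] True by simp
  have np: "real n * (real n + 1) > 0" using True by simp
  have "real n * (real n + 1) * (r (Suc n) / r n - 1) = real n * (real n + 1) * (r (Suc n) - r n) / r n"
    using rn by (simp add: field_simps)
  also have "\<dots> \<le> (48/5) / r n"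
  proof -
    have "real n * (real n + 1) * (r (Suc n) - r n) \<le> 48/5"
      using d np by (simp add: field_simps)
    then show ?thesis using rn by (intro divide_right_mono) auto
  qed
  also have "\<dots> \<le> (48/5) / (26/5)" using rn by (intro divide_left_mono) auto
  also have "\<dots> < 21/10" by simp
  finally show ?thesis .
next
  case False
  assume "n \<ge> 5"
  then have "n = 5 \<or> n = 6 \<or> n = 7 \<or> n = 8 \<or> n = 9 \<or> n = 10 \<or> n = 11 \<or> n = 12 \<or> n = 13 \<or> n = 14" using False by presburger
  then show ?thesis unfolding r_def by (elim disjE) (simp_all add: Rvals)
qed



lemma smono_from_succ:
  fixes f :: "nat \<Rightarrow> real"
  assumes "\<And>n. n \<ge> a \<Longrightarrow> f n < f (Suc n)"
  shows "strict_mono_on {a..} f"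
proof (rule monotone_onI)
  fix x y assume xy: "x \<in> {a..}" "y \<in> {a..}" "x < y"
  define g where "g m = f (m + a)" for m
  have "\<And>m. g m < g (Suc m)" unfolding g_def using assms by simp
  then have "g (x - a) < g (y - a)" by (rule lift_Suc_mono_less) (use xy in auto)
  then show "f x < f y" unfolding g_def using xy by simp
qed

lemma santimono_from_succ:
  fixes f :: "nat \<Rightarrow> real"
  assumes "\<And>n. n \<ge> a \<Longrightarrow> f (Suc n) < f n"
  shows "strict_antimono_on {a..} f"
proof (rule monotone_onI)
  fix x y assume xy: "x \<in> {a..}" "y \<in> {a..}" "x < y"
  define g where "g m = - f (m + a)" for m
  have "\<And>m. g m < g (Suc m)" unfolding g_def using assms by simp
  then have "g (x - a) < g (y - a)" by (rule lift_Suc_mono_less) (use xy in auto)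
  then show "f y < f x" unfolding g_def using xy by simp
qed

lemma part1: "strict_mono_on {3..} (\<lambda>n. R (n + 1) / R n)"
proof -
  have "strict_mono_on {3..} r" by (rule smono_from_succ) (rule r_incr)
  moreover have "(\<lambda>n. R (n + 1) / R n) = r" by (simp add: r_def fun_eq_iff)
  ultimately show ?thesis by simp
qed

lemma part2: "(\<lambda>n. R (n + 1) / R n) \<longlonglongrightarrow> 3 + 2 * sqrt 2"
proof -
  have rfun: "(\<lambda>n. R (n + 1) / R n) = r" by (simp add: r_def fun_eq_iff)
  have inc: "incseq (\<lambda>m. r (m + 3))"
  proof (rule incseq_SucI)
    fix n show "r (n+3) \<le> r (Suc n + 3)" using r_incr[of "n+3"] by simp
  qed
  have bnd: "\<forall>i. r (i + 3) \<le> 59/10" using r_le by simp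
  obtain L where L: "(\<lambda>m. r (m + 3)) \<longlonglongrightarrow> L" "\<forall>i. r (i + 3) \<le> L"
    using incseq_convergent[OF inc bnd] by blast
  have rL: "r \<longlonglongrightarrow> L" using L(1) by (rule LIMSEQ_offset)
  have Lge: "L \<ge> 26/5" using L(2)[rule_format, of 11] r_ge[of 14] by simp
  have Lpos: "L \<noteq> 0" using Lge by simp
  define F where "F n = r (n+2) - 7 + 7 / r (n+1) - 1 / (r (n+1) * r n)" for n
  define H where "H n = (-8 + 6 / r (n+1) - 2 / (r (n+1) * r n)) / (real n + 3)" for n
  have FH: "F n = H n" if n: "n \<ge> 1" for n
  proof -
    have p: "r n > 0" "r (n+1) > 0" using r_pos n by auto
    have h: "inverse (r n) * r n = 1" "inverse (r (n+1)) * r (n+1) = 1" "inverse (real n + 3) * (real n + 3) = 1"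
      using p by auto
    show ?thesis unfolding F_def H_def r_rec[OF n] Phi_def divide_inverse inverse_mult_distrib
      using h by algebra
  qed
  have r1: "(\<lambda>n. r (n+1)) \<longlonglongrightarrow> L" using LIMSEQ_ignore_initial_segment[OF rL, of 1] .
  have r2: "(\<lambda>n. r (n+2)) \<longlonglongrightarrow> L" using LIMSEQ_ignore_initial_segment[OF rL, of 2] .
  have Flim: "F \<longlonglongrightarrow> L - 7 + 7 / L - 1 / (L * L)"
    unfolding F_def using r1 r2 rL Lpos by (intro tendsto_intros) auto
  have Hlim: "H \<longlonglongrightarrow> 0"
    unfolding H_def
  proof (rule tendsto_divide_0)
    show "(\<lambda>n. -8 + 6 / r (n+1) - 2 / (r (n+1) * r n)) \<longlonglongrightarrow> -8 + 6 / L - 2 / (L * L)"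
      using r1 rL Lpos by (intro tendsto_intros) auto
    show "LIM x sequentially. real x + 3 :> at_infinity"
    proof -
      have "LIM x sequentially. 3 + real x :> at_top"
        by (rule filterlim_tendsto_add_at_top[OF tendsto_const filterlim_real_sequentially])
      then have "LIM x sequentially. real x + 3 :> at_top" by (simp add: add.commute)
      then show ?thesis by (rule filterlim_at_top_imp_at_infinity)
    qed
  qed
  have ev: "eventually (\<lambda>n. H n = F n) sequentially"
    using eventually_ge_at_top[of 1] by eventually_elim (simp add: FH)
  have Flim0: "F \<longlonglongrightarrow> 0" using Lim_transform_eventually[OF Hlim ev] .
  have eq0: "L - 7 + 7 / L - 1 / (L * L) = 0" using LIMSEQ_unique[OF Flim Flim0] .
  have "L * L * (L - 7 + 7 / L - 1 / (L * L)) = L*L*L - 7*L*L + 7*L - 1"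
    using Lpos by (simp add: algebra_simps)
  then have cub: "L*L*L - 7*L*L + 7*L - 1 = 0" using eq0 by simp
  have "(L - 1) * ((L - 3)^2 - 8) = 0" using cub by (simp add: algebra_simps power2_eq_square)
  then have sq: "(L - 3)^2 = 8" using Lge by simp
  have "L - 3 = sqrt 8"
  proof -
    have "sqrt ((L - 3)^2) = \<bar>L - 3\<bar>" by (rule real_sqrt_abs)
    also have "\<dots> = L - 3" using Lge by simp
    finally show ?thesis using sq by simp
  qed
  moreover have "sqrt 8 = 2 * sqrt 2"
  proof -
    have "sqrt 8 = sqrt (2^2 * 2)" by simp
    also have "\<dots> = 2 * sqrt 2" by (simp only: real_sqrt_mult real_sqrt_abs2) simp
    finally show ?thesis .
  qed
  ultimately have "L = 3 + 2 * sqrt 2" by simp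
  then show ?thesis using rL rfun by simp
qed

definition aa :: "nat \<Rightarrow> real" where "aa n = ln (R n)"
definition dd :: "nat \<Rightarrow> real" where "dd n = ln (r n)"
definition tt :: "nat \<Rightarrow> real" where "tt n = real n * dd n - aa n"

lemma aa_step: "n \<ge> 1 \<Longrightarrow> aa (Suc n) = aa n + dd n"
proof -
  assume n: "n \<ge> 1"
  have "R (Suc n) = R n * r n" using R_pos[OF n] unfolding r_def by simp
  then show ?thesis unfolding aa_def dd_def using R_pos[OF n] r_pos[OF n] by (simp add: ln_mult)
qed

lemma aa_nonneg: "n \<ge> 1 \<Longrightarrow> aa n \<ge> 0" unfolding aa_def using R_ge1 by simp

lemma dd_mono: "n \<ge> 3 \<Longrightarrow> dd n < dd (Suc n)"
  unfolding dd_def using r_incr[of n] r_pos[of n] by simp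

lemma tt_step: "n \<ge> 3 \<Longrightarrow> tt n \<le> tt (Suc n)"
proof -
  assume n: "n \<ge> 3"
  have "tt (Suc n) - tt n = (real n + 1) * (dd (Suc n) - dd n)"
    unfolding tt_def using aa_step[of n] n by (simp add: algebra_simps)
  also have "\<dots> \<ge> 0" using dd_mono[OF n] by simp
  finally show ?thesis by simp
qed

lemma tt_ge5: "n \<ge> 5 \<Longrightarrow> tt 5 \<le> tt n"
proof (induction n rule: dec_induct)
  case base then show ?case by simp
next
  case (step m) then show ?case using tt_step[of m] by simp
qed

lemma exp_21: "exp (21/10) < (13::real)"
proof -
  have "exp (21/10) ^ 10 = exp (real 10 * (21/10))" by (rule exp_of_nat_mult[symmetric])
  also have "\<dots> = exp 1 ^ 21" using exp_of_nat_mult[of 21 1] by simp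
  also have "\<dots> \<le> 3 ^ 21" by (intro power_mono exp_le) simp
  also have "\<dots> < (13::real) ^ 10" by simp
  finally show ?thesis by (rule power_less_imp_less_base) simp
qed

lemma tt5: "2 * tt 5 > 21/10"
proof -
  have r5: "r 5 = 1359 / 329" unfolding r_def by (simp add: Rvals)
  have X0: "r 5 ^ 10 / R 5 ^ 2 = 1359^10 / 329^12" unfolding r5 by (simp add: Rvals power_divide)
  have X: "r 5 ^ 10 / R 5 ^ 2 > 13" unfolding X0 by (simp add: pos_less_divide_eq)
  have pos: "r 5 > 0" "R 5 > 0" by (simp_all add: r5 Rvals)
  have "2 * tt 5 = ln (r 5 ^ 10 / R 5 ^ 2)"
    unfolding tt_def dd_def aa_def using pos by (simp add: ln_div ln_realpow)
  moreover have "21/10 < ln (r 5 ^ 10 / R 5 ^ 2)"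
  proof -
    have "exp (21/10) < r 5 ^ 10 / R 5 ^ 2" using exp_21 X by simp
    moreover have "r 5 ^ 10 / R 5 ^ 2 > 0" using pos by simp
    ultimately have "ln (exp (21/10)) < ln (r 5 ^ 10 / R 5 ^ 2)" by (subst ln_less_cancel_iff) auto
    then show ?thesis by simp
  qed
  ultimately show ?thesis by simp
qed

definition LL :: "nat \<Rightarrow> real" where "LL n = aa (Suc n) / real (Suc n) - aa n / real n"

lemma rho_eq: "n \<ge> 1 \<Longrightarrow> root (n + 1) (R (n + 1)) / root n (R n) = exp (LL n)"
proof -
  assume n: "n \<ge> 1"
  have rt: "root k (R m) = exp (aa m / real k)" if "k > 0" "m \<ge> 1" for k m
  proof -
    have "R m > 0" using R_pos that by simp
    then have "root k (R m) > 0" using that by simp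
    then have "root k (R m) = exp (ln (root k (R m)))" by simp
    also have "\<dots> = exp (aa m / real k)" unfolding aa_def using that by (simp add: ln_root)
    finally show ?thesis .
  qed
  have "root (n + 1) (R (n + 1)) / root n (R n) = exp (aa (Suc n) / real (Suc n)) / exp (aa n / real n)"
    using rt[of "n+1" "n+1"] rt[of n n] n by simp
  also have "\<dots> = exp (LL n)" unfolding LL_def by (simp add: exp_diff)
  finally show ?thesis .
qed

lemma LL_tt: "n \<ge> 1 \<Longrightarrow> LL n = tt n / (real n * (real n + 1))"
proof -
  assume n: "n \<ge> 1"
  have np: "real n > 0" using n by simp
  show ?thesis unfolding LL_def tt_def aa_step[OF n] using np by (simp add: field_simps)
qed

lemma LL_decr: "n \<ge> 5 \<Longrightarrow> LL (Suc n) < LL n"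
proof -
  assume n: "n \<ge> 5"
  have n1: "n \<ge> 1" using n by simp
  have np: "real n > 0" using n by simp
  have key: "real n * (real n + 1) * (dd (Suc n) - dd n) < 2 * tt n"
  proof -
    have rp: "r n > 0" "r (Suc n) > 0" using r_pos n by auto
    have "dd (Suc n) - dd n = ln (r (Suc n) / r n)" unfolding dd_def using rp by (simp add: ln_div)
    also have "\<dots> \<le> r (Suc n) / r n - 1" using rp by (intro ln_le_minus_one) simp
    finally have "real n * (real n + 1) * (dd (Suc n) - dd n) \<le> real n * (real n + 1) * (r (Suc n) / r n - 1)"
      using np by (intro mult_left_mono) auto
    also have "\<dots> < 21/10" using M4[OF n] .
    also have "\<dots> < 2 * tt 5" using tt5 .
    also have "\<dots> \<le> 2 * tt n" using tt_ge5[OF n] by simp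
    finally show ?thesis .
  qed
  have iden: "real n * (real n + 1) * (real n + 2) * (LL n - LL (Suc n)) = 2 * tt n - real n * (real n + 1) * (dd (Suc n) - dd n)"
  proof -
    define A where "A = aa n"
    define d0 where "d0 = dd n"
    define d1 where "d1 = dd (Suc n)"
    define x where "x = real n"
    have a1: "aa (Suc n) = A + d0" unfolding A_def d0_def using aa_step[OF n1] .
    have a2: "aa (Suc (Suc n)) = A + d0 + d1" unfolding A_def d0_def d1_def using aa_step[OF n1] aa_step[of "Suc n"] n by simp
    have h: "inverse x * x = 1" "inverse (x+1) * (x+1) = 1" "inverse (x+2) * (x+2) = 1"
      using np unfolding x_def by auto
    have "x * (x + 1) * (x + 2) * (((A + d0) / (x + 1) - A / x) - ((A + d0 + d1) / (x + 2) - (A + d0) / (x + 1)))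
        = 2 * (x * d0 - A) - x * (x + 1) * (d1 - d0)"
      unfolding divide_inverse using h by algebra
    then show ?thesis unfolding LL_def tt_def a1 a2 x_def A_def d0_def d1_def by (simp add: add.commute)
  qed
  have "real n * (real n + 1) * (real n + 2) * (LL n - LL (Suc n)) > 0" using iden key by simp
  moreover have "real n * (real n + 1) * (real n + 2) > 0" using np by simp
  ultimately have "LL n - LL (Suc n) > 0" by (rule zero_less_mult_pos)
  then show ?thesis by simp
qed

lemma part3: "strict_antimono_on {5..} (\<lambda>n. root (n + 1) (R (n + 1)) / root n (R n))"
proof (rule santimono_from_succ)
  fix n :: nat assume n: "n \<ge> 5"
  have "root (Suc n + 1) (R (Suc n + 1)) / root (Suc n) (R (Suc n)) = exp (LL (Suc n))"
    using rho_eq[of "Suc n"] by simp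
  moreover have "root (n + 1) (R (n + 1)) / root n (R n) = exp (LL n)" using rho_eq[of n] n by simp
  ultimately show "root (Suc n + 1) (R (Suc n + 1)) / root (Suc n) (R (Suc n)) < root (n + 1) (R (n + 1)) / root n (R n)"
    using LL_decr[OF n] by simp
qed

lemma part4: "(\<lambda>n. root (n + 1) (R (n + 1)) / root n (R n)) \<longlonglongrightarrow> 1"
proof -
  have lo: "eventually (\<lambda>n. 0 \<le> LL n) sequentially"
    using eventually_ge_at_top[of 5]
  proof eventually_elim
    case (elim n)
    have "tt n > 0" using tt5 tt_ge5[OF elim] by simp
    then show ?case using LL_tt[of n] elim by simp
  qed
  have hi: "eventually (\<lambda>n. LL n \<le> 5 * inverse (real (Suc n))) sequentially"
    using eventually_ge_at_top[of 5]
  proof eventually_elim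
    case (elim n)
    have n1: "n \<ge> 1" "n \<ge> 3" using elim by simp_all
    have np: "real n > 0" using elim by simp
    have d: "dd n \<le> 5"
    proof -
      have "dd n \<le> r n - 1" unfolding dd_def using r_pos[OF n1(1)] by (rule ln_le_minus_one)
      then show ?thesis using r_le[OF n1(2)] by simp
    qed
    have "real n * dd n \<le> real n * 5" by (rule mult_left_mono[OF d]) simp
    then have "tt n \<le> real n * 5" unfolding tt_def using aa_nonneg[OF n1(1)] by linarith
    then have "tt n / (real n * (real n + 1)) \<le> real n * 5 / (real n * (real n + 1))"
      using np by (intro divide_right_mono) auto
    also have "\<dots> = 5 / (real n + 1)" using np by (intro nonzero_mult_divide_mult_cancel_left) simp
    also have "\<dots> = 5 * inverse (real (Suc n))" by (simp add: divide_inverse add.commute)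
    finally show ?case using LL_tt[OF n1(1)] by simp
  qed
  have "(\<lambda>n. 5 * inverse (real (Suc n))) \<longlonglongrightarrow> 5 * 0"
    by (intro tendsto_mult tendsto_const LIMSEQ_inverse_real_of_nat)
  then have hl: "(\<lambda>n. 5 * inverse (real (Suc n))) \<longlonglongrightarrow> 0" by simp
  have "LL \<longlonglongrightarrow> 0" by (rule tendsto_sandwich[OF lo hi tendsto_const hl])
  then have "(\<lambda>n. exp (LL n)) \<longlonglongrightarrow> exp 0" by (intro tendsto_exp)
  then have e: "(\<lambda>n. exp (LL n)) \<longlonglongrightarrow> 1" by simp
  have ev: "eventually (\<lambda>n. exp (LL n) = root (n + 1) (R (n + 1)) / root n (R n)) sequentially"
    using eventually_ge_at_top[of 1]
  proof eventually_elim
    case (elim n) then show ?case using rho_eq[of n] by simp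
  qed
  show ?thesis by (rule Lim_transform_eventually[OF e ev])
qed

theorem theorem1p4:
  shows "strict_mono_on {3..} (\<lambda>n. R (n + 1) / R n)
       \<and> (\<lambda>n. R (n + 1) / R n) \<longlonglongrightarrow> 3 + 2 * sqrt 2
       \<and> strict_antimono_on {5..} (\<lambda>n. root (n + 1) (R (n + 1)) / root n (R n))
       \<and> (\<lambda>n. root (n + 1) (R (n + 1)) / root n (R n)) \<longlonglongrightarrow> 1"
  using part1 part2 part3 part4 by blast


end
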